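(* Let $M$ be a partial multiplication matrix whose row-column graph is a cycle, and let $\pi^\#$ be a gridded $M$-coil with points $v_1,\dots,v_n$ (ordered as in the definition of a coil). Then for every $1<i<n$, the gridded permutation $\pi^\#-v_i$ obtained by removing $v_i$ is $M$-divisible; specifically $\pi^\#-v_i=\sigma^\#\boxplus\tau^\#$, where $\sigma^\#$ and $\tau^\#$ are the gridded subpermutations on the points $v_{i+1},\dots,v_n$ and on the points $v_1,\dots,v_{i-1}$ respectively.
   Context: A gridding matrix has entries in $\{0,1,-1\}$; an $m\times n$ one has $m$ columns, $n$ rows, $M_{ij}$ in column $i$ from the left and row $j$ from the bottom. An $M$-gridding of a permutation $\pi$ of length $L$ is a choice of vertical lines $\tfrac12=v_0\le\dots\le v_m=L+\tfrac12$ and horizontal lines $\tfrac12=h_0\le\dots\le h_n=L+\tfrac12$, not through points of $\pi$, such that in each cell $C_{ij}=\{v_{i-1}<x<v_i,\ h_{j-1}<y<h_j\}$ the points of $\pi$ are absent if $M_{ij}=0$, increasing if $M_{ij}=1$, decreasing if $M_{ij}=-1$; the result is an $M$-gridded permutation. The row-column graph $G_M$ is the bipartite graph on $\{1,\dots,m\}\cup\{1',\dots,n'\}$ with edge $ij'$ iff $M_{ij}\ne0$. $M$ is a partial multiplication matrix: there are fixed $c_1,\dots,c_m,r_1,\dots,r_n\in\{\pm1\}$ with $M_{ij}=c_ir_j$ for each non-zero entry. Column $i$ is oriented left-to-right if $c_i=1$, right-to-left otherwise; row $j$ bottom-to-top if $r_j=1$, top-to-bottom otherwise. The orientation digraph of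 an $M$-gridded permutation has its points as vertices with $x\to y$ whenever $x,y$ lie in a common column of cells and $x$ precedes $y$ in that column's orientation, or in a common row of cells and $x$ precedes $y$ in that row's orientation. $M$-sum: $\sigma^\#\boxplus\tau^\#$ is the $M$-gridded permutation whose points are those of $\sigma^\#$ and $\tau^\#$, each in its cell, with the relative order among points of $\sigma^\#$ and among points of $\tau^\#$ unchanged, and such that in every column (resp. row) of cells all points of $\sigma^\#$ precede all points of $\tau^\#$ in that column's (resp. row's) orientation. $M$-divisible means equal to $\sigma^\#\boxplus\tau^\#$ with both non-empty. Let $\ell$ be the length of the cycle $G_M$. A gridded $M$-coil is an $M$-gridded permutation of length $n>\ell$ with an ordering $v_1,\dots,v_n$ of its points and a labelling of the $\ell$ non-zero cells by $1,\dots,\ell$ such that (C1) $v_i$ lies in cell $i\bmod\ell$ (residues in $\{1,\dots,\ell\}$); (C2) $v_{i-1}\to v_i$ for $1<i\le n$; (C3) $v_i\to v_{i-\ell-1}$ for $\ell+1<i\le n$; (C4) $v_{\ell+1}\to v_1$. *)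

theory Defs
  imports "HOL-Combinatorics.Permutations" Complex_Main
begin

text \<open>A gridding matrix with m columns and nr rows, M i j = entry in column i, row j
  (indices starting at 1).\<close>
definition gridding_matrix :: "nat \<Rightarrow> nat \<Rightarrow> (nat \<Rightarrow> nat \<Rightarrow> int) \<Rightarrow> bool" where
  "gridding_matrix m nr M \<longleftrightarrow> (\<forall>i\<in>{1..m}. \<forall>j\<in>{1..nr}. M i j \<in> {0, 1, -1})"

definition partial_mult_matrix ::
  "nat \<Rightarrow> nat \<Rightarrow> (nat \<Rightarrow> nat \<Rightarrow> int) \<Rightarrow> (nat \<Rightarrow> int) \<Rightarrow> (nat \<Rightarrow> int) \<Rightarrow> bool" where
  "partial_mult_matrix m nr M c r \<longleftrightarrow>
     (\<forall>i\<in>{1..m}. c i \<in> {1, -1}) \<and> (\<forall>j\<in>{1..nr}. r j \<in> {1, -1}) \<and>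
     (\<forall>i\<in>{1..m}. \<forall>j\<in>{1..nr}. M i j \<noteq> 0 \<longrightarrow> M i j = c i * r j)"

definition rc_vertices :: "nat \<Rightarrow> nat \<Rightarrow> (nat + nat) set" where
  "rc_vertices m nr = Inl ` {1..m} \<union> Inr ` {1..nr}"

definition rc_adj :: "nat \<Rightarrow> nat \<Rightarrow> (nat \<Rightarrow> nat \<Rightarrow> int) \<Rightarrow> nat + nat \<Rightarrow> nat + nat \<Rightarrow> bool" where
  "rc_adj m nr M a b \<longleftrightarrow>
     (\<exists>i\<in>{1..m}. \<exists>j\<in>{1..nr}. M i j \<noteq> 0 \<and>
        ((a = Inl i \<and> b = Inr j) \<or> (a = Inr j \<and> b = Inl i)))"

definition rc_graph_is_cycle :: "nat \<Rightarrow> nat \<Rightarrow> (nat \<Rightarrow> nat \<Rightarrow> int) \<Rightarrow> bool" where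
  "rc_graph_is_cycle m nr M \<longleftrightarrow>
     rc_vertices m nr \<noteq> {} \<and>
     (\<forall>a\<in>rc_vertices m nr. card {b. rc_adj m nr M a b} = 2) \<and>
     (\<forall>a\<in>rc_vertices m nr. \<forall>b\<in>rc_vertices m nr. (rc_adj m nr M)\<^sup>*\<^sup>* a b)"

text \<open>Non-zero cells (= edges of G_M); their number is the cycle length.\<close>
definition nz_cells :: "nat \<Rightarrow> nat \<Rightarrow> (nat \<Rightarrow> nat \<Rightarrow> int) \<Rightarrow> (nat \<times> nat) set" where
  "nz_cells m nr M = {(i, j). i \<in> {1..m} \<and> j \<in> {1..nr} \<and> M i j \<noteq> 0}"

definition cycle_length :: "nat \<Rightarrow> nat \<Rightarrow> (nat \<Rightarrow> nat \<Rightarrow> int) \<Rightarrow> nat" where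
  "cycle_length m nr M = card (nz_cells m nr M)"

text \<open>Points of a permutation \<pi> of length L are (x, \<pi> x), x \<in> {1..L}; we identify a point
  with its x-coordinate x. Vertical lines v 0..v m, horizontal lines h 0..h nr.\<close>
definition in_col :: "(nat \<Rightarrow> real) \<Rightarrow> nat \<Rightarrow> nat \<Rightarrow> bool" where
  "in_col v i x \<longleftrightarrow> v (i - 1) < real x \<and> real x < v i"

definition in_row :: "(nat \<Rightarrow> real) \<Rightarrow> (nat \<Rightarrow> nat) \<Rightarrow> nat \<Rightarrow> nat \<Rightarrow> bool" where
  "in_row h \<pi> j x \<longleftrightarrow> h (j - 1) < real (\<pi> x) \<and> real (\<pi> x) < h j"

definition in_cell :: "(nat \<Rightarrow> real) \<Rightarrow> (nat \<Rightarrow> real) \<Rightarrow> (nat \<Rightarrow> nat) \<Rightarrow> nat \<Rightarrow> nat \<Rightarrow> nat \<Rightarrow> bool" where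
  "in_cell v h \<pi> i j x \<longleftrightarrow> in_col v i x \<and> in_row h \<pi> j x"

definition gridded_perm ::
  "nat \<Rightarrow> nat \<Rightarrow> (nat \<Rightarrow> nat \<Rightarrow> int) \<Rightarrow> nat \<Rightarrow> (nat \<Rightarrow> nat) \<Rightarrow> (nat \<Rightarrow> real) \<Rightarrow> (nat \<Rightarrow> real) \<Rightarrow> bool" where
  "gridded_perm m nr M L \<pi> v h \<longleftrightarrow>
     \<pi> permutes {1..L} \<and>
     v 0 = 1/2 \<and> v m = real L + 1/2 \<and> (\<forall>i<m. v i \<le> v (Suc i)) \<and>
     h 0 = 1/2 \<and> h nr = real L + 1/2 \<and> (\<forall>j<nr. h j \<le> h (Suc j)) \<and>
     (\<forall>i\<le>m. \<forall>x\<in>{1..L}. v i \<noteq> real x) \<and>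
     (\<forall>j\<le>nr. \<forall>x\<in>{1..L}. h j \<noteq> real (\<pi> x)) \<and>
     (\<forall>i\<in>{1..m}. \<forall>j\<in>{1..nr}. \<forall>x\<in>{1..L}.
        in_cell v h \<pi> i j x \<longrightarrow> M i j \<noteq> 0) \<and>
     (\<forall>i\<in>{1..m}. \<forall>j\<in>{1..nr}. \<forall>x\<in>{1..L}. \<forall>y\<in>{1..L}.
        in_cell v h \<pi> i j x \<longrightarrow> in_cell v h \<pi> i j y \<longrightarrow> x < y \<longrightarrow>
        (M i j = 1 \<longrightarrow> \<pi> x < \<pi> y) \<and> (M i j = -1 \<longrightarrow> \<pi> y < \<pi> x))"

definition col_prec :: "(nat \<Rightarrow> int) \<Rightarrow> nat \<Rightarrow> nat \<Rightarrow> nat \<Rightarrow> bool" where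
  "col_prec c i x y \<longleftrightarrow> (if c i = 1 then x < y else y < x)"

definition row_prec :: "(nat \<Rightarrow> int) \<Rightarrow> (nat \<Rightarrow> nat) \<Rightarrow> nat \<Rightarrow> nat \<Rightarrow> nat \<Rightarrow> bool" where
  "row_prec r \<pi> j x y \<longleftrightarrow> (if r j = 1 then \<pi> x < \<pi> y else \<pi> y < \<pi> x)"

definition orient_arrow ::
  "nat \<Rightarrow> nat \<Rightarrow> (nat \<Rightarrow> int) \<Rightarrow> (nat \<Rightarrow> int) \<Rightarrow> (nat \<Rightarrow> nat) \<Rightarrow> (nat \<Rightarrow> real) \<Rightarrow> (nat \<Rightarrow> real)
   \<Rightarrow> nat \<Rightarrow> nat \<Rightarrow> bool" where
  "orient_arrow m nr c r \<pi> v h x y \<longleftrightarrow>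
     (\<exists>i\<in>{1..m}. in_col v i x \<and> in_col v i y \<and> col_prec c i x y) \<or>
     (\<exists>j\<in>{1..nr}. in_row h \<pi> j x \<and> in_row h \<pi> j y \<and> row_prec r \<pi> j x y)"

text \<open>Gridded M-coil: p k is the point v_k (k = 1..L), lab labels the non-zero cells by 1..ell.\<close>
definition gridded_coil ::
  "nat \<Rightarrow> nat \<Rightarrow> (nat \<Rightarrow> nat \<Rightarrow> int) \<Rightarrow> (nat \<Rightarrow> int) \<Rightarrow> (nat \<Rightarrow> int) \<Rightarrow> nat \<Rightarrow> (nat \<Rightarrow> nat)
   \<Rightarrow> (nat \<Rightarrow> real) \<Rightarrow> (nat \<Rightarrow> real) \<Rightarrow> (nat \<Rightarrow> nat) \<Rightarrow> (nat \<Rightarrow> nat \<times> nat) \<Rightarrow> bool" where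
  "gridded_coil m nr M c r L \<pi> v h p lab \<longleftrightarrow>
     (let ell = cycle_length m nr M; arr = orient_arrow m nr c r \<pi> v h in
     gridded_perm m nr M L \<pi> v h \<and> ell < L \<and>
     bij_betw p {1..L} {1..L} \<and>
     bij_betw lab {1..ell} (nz_cells m nr M) \<and>
     (\<forall>k\<in>{1..L}. in_cell v h \<pi> (fst (lab ((k - 1) mod ell + 1))) (snd (lab ((k - 1) mod ell + 1))) (p k)) \<and>
     (\<forall>k. 1 < k \<and> k \<le> L \<longrightarrow> arr (p (k - 1)) (p k)) \<and>
     (\<forall>k. ell + 1 < k \<and> k \<le> L \<longrightarrow> arr (p k) (p (k - ell - 1))) \<and>
     arr (p (ell + 1)) (p 1))"

text \<open>Cells and relative orders are inherited from (\<pi>, v, h), so the remaining conditions of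
  the M-sum hold automatically.\<close>
definition is_M_sum_on ::
  "nat \<Rightarrow> nat \<Rightarrow> (nat \<Rightarrow> int) \<Rightarrow> (nat \<Rightarrow> int) \<Rightarrow> (nat \<Rightarrow> nat) \<Rightarrow> (nat \<Rightarrow> real) \<Rightarrow> (nat \<Rightarrow> real)
   \<Rightarrow> nat set \<Rightarrow> nat set \<Rightarrow> nat set \<Rightarrow> bool" where
  "is_M_sum_on m nr c r \<pi> v h Q S T \<longleftrightarrow>
     S \<inter> T = {} \<and> S \<union> T = Q \<and>
     (\<forall>s\<in>S. \<forall>t\<in>T. \<forall>i\<in>{1..m}. in_col v i s \<and> in_col v i t \<longrightarrow> col_prec c i s t) \<and>
     (\<forall>s\<in>S. \<forall>t\<in>T. \<forall>j\<in>{1..nr}. in_row h \<pi> j s \<and> in_row h \<pi> j t \<longrightarrow> row_prec r \<pi> j s t)"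

definition M_divisible_on ::
  "nat \<Rightarrow> nat \<Rightarrow> (nat \<Rightarrow> int) \<Rightarrow> (nat \<Rightarrow> int) \<Rightarrow> (nat \<Rightarrow> nat) \<Rightarrow> (nat \<Rightarrow> real) \<Rightarrow> (nat \<Rightarrow> real)
   \<Rightarrow> nat set \<Rightarrow> bool" where
  "M_divisible_on m nr c r \<pi> v h Q \<longleftrightarrow>
     (\<exists>S T. S \<noteq> {} \<and> T \<noteq> {} \<and> is_M_sum_on m nr c r \<pi> v h Q S T)"

end

theory Submission
  imports Defs
begin

locale coilctx =
  fixes m nr :: nat and M :: "nat \<Rightarrow> nat \<Rightarrow> int" and c r :: "nat \<Rightarrow> int"
    and L :: nat and \<pi> p :: "nat \<Rightarrow> nat" and v h :: "nat \<Rightarrow> real" and lab :: "nat \<Rightarrow> nat \<times> nat"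
  assumes gm: "gridding_matrix m nr M"
    and pm: "partial_mult_matrix m nr M c r"
    and cyc: "rc_graph_is_cycle m nr M"
    and co: "gridded_coil m nr M c r L \<pi> v h p lab"
begin

definition "ell = cycle_length m nr M"
definition "rs k = (k - 1) mod ell + 1"
definition "cellof k = lab (rs k)"
definition "lns (e::nat\<times>nat) = {Inl (fst e), Inr (snd e)}"
definition "prc w x y = (case w of Inl i \<Rightarrow> col_prec c i x y | Inr j \<Rightarrow> row_prec r \<pi> j x y)"
abbreviation "arr \<equiv> orient_arrow m nr c r \<pi> v h"

lemma gp: "gridded_perm m nr M L \<pi> v h"
  and lt: "ell < L"
  and pb: "bij_betw p {1..L} {1..L}"
  and lb: "bij_betw lab {1..ell} (nz_cells m nr M)"
  and inc: "k \<in> {1..L} \<Longrightarrow> in_cell v h \<pi> (fst (cellof k)) (snd (cellof k)) (p k)"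
  and c2: "1 < k \<Longrightarrow> k \<le> L \<Longrightarrow> arr (p (k - 1)) (p k)"
  and c3: "ell + 1 < k \<Longrightarrow> k \<le> L \<Longrightarrow> arr (p k) (p (k - ell - 1))"
  and c4: "arr (p (ell + 1)) (p 1)"
  using co unfolding gridded_coil_def Let_def ell_def cellof_def rs_def by auto

lemma prc_trans: "prc w x y \<Longrightarrow> prc w y z \<Longrightarrow> prc w x z"
  by (cases w) (auto simp: prc_def col_prec_def row_prec_def split: if_splits)

lemma mono_v: "\<forall>i<m. v i \<le> v (Suc i) \<Longrightarrow> i \<le> j \<Longrightarrow> j \<le> m \<Longrightarrow> v i \<le> v j"
proof (induction j)
  case 0 then show ?case by simp
next
  case (Suc j) then show ?case by (cases "i = Suc j") (auto intro: order_trans)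
qed

lemma mono_h: "\<forall>i<nr. h i \<le> h (Suc i) \<Longrightarrow> i \<le> j \<Longrightarrow> j \<le> nr \<Longrightarrow> h i \<le> h j"
proof (induction j)
  case 0 then show ?case by simp
next
  case (Suc j) then show ?case by (cases "i = Suc j") (auto intro: order_trans)
qed

lemma col_unique:
  assumes "i \<in> {1..m}" "i' \<in> {1..m}" "in_col v i x" "in_col v i' x"
  shows "i = i'"
proof (rule ccontr)
  assume ne: "i \<noteq> i'"
  have mv: "\<forall>i<m. v i \<le> v (Suc i)" using gp unfolding gridded_perm_def by auto
  show False
  proof (cases "i < i'")
    case True
    have "v i \<le> v (i' - 1)" using mono_v[OF mv, of i "i' - 1"] True assms by auto
    then show False using assms unfolding in_col_def by auto
  next
    case False
    then have "i' < i" using ne by auto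
    have "v i' \<le> v (i - 1)" using mono_v[OF mv, of i' "i - 1"] \<open>i' < i\<close> assms by auto
    then show False using assms unfolding in_col_def by auto
  qed
qed

lemma row_unique:
  assumes "j \<in> {1..nr}" "j' \<in> {1..nr}" "in_row h \<pi> j x" "in_row h \<pi> j' x"
  shows "j = j'"
proof (rule ccontr)
  assume ne: "j \<noteq> j'"
  have mv: "\<forall>i<nr. h i \<le> h (Suc i)" using gp unfolding gridded_perm_def by auto
  show False
  proof (cases "j < j'")
    case True
    have "h j \<le> h (j' - 1)" using mono_h[OF mv, of j "j' - 1"] True assms by auto
    then show False using assms unfolding in_row_def by auto
  next
    case False
    then have "j' < j" using ne by auto
    have "h j' \<le> h (j - 1)" using mono_h[OF mv, of j' "j - 1"] \<open>j' < j\<close> assms by auto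
    then show False using assms unfolding in_row_def by auto
  qed
qed

lemma nz_fin: "finite (nz_cells m nr M)"
proof -
  have "nz_cells m nr M \<subseteq> {1..m} \<times> {1..nr}" unfolding nz_cells_def by auto
  then show ?thesis by (rule finite_subset) auto
qed

lemma deg_col: "i \<in> {1..m} \<Longrightarrow> card {b. rc_adj m nr M (Inl i) b} = 2"
  using cyc unfolding rc_graph_is_cycle_def rc_vertices_def by auto

lemma deg_row: "j \<in> {1..nr} \<Longrightarrow> card {b. rc_adj m nr M (Inr j) b} = 2"
  using cyc unfolding rc_graph_is_cycle_def rc_vertices_def by auto

lemma adj_fin: "finite {b. rc_adj m nr M a b}"
proof -
  have "{b. rc_adj m nr M a b} \<subseteq> Inl ` {1..m} \<union> Inr ` {1..nr}" unfolding rc_adj_def by auto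
  then show ?thesis by (rule finite_subset) auto
qed

lemma adj_cell: "e \<in> nz_cells m nr M \<Longrightarrow> rc_adj m nr M (Inl (fst e)) (Inr (snd e)) \<and> rc_adj m nr M (Inr (snd e)) (Inl (fst e))"
  unfolding rc_adj_def nz_cells_def by (cases e) auto

lemma nz_range: "e \<in> nz_cells m nr M \<Longrightarrow> fst e \<in> {1..m} \<and> snd e \<in> {1..nr} \<and> M (fst e) (snd e) \<noteq> 0"
  unfolding nz_cells_def by auto

lemma no_three_col:
  assumes "e1 \<in> nz_cells m nr M" "e2 \<in> nz_cells m nr M" "e3 \<in> nz_cells m nr M"
    "e1 \<noteq> e2" "e1 \<noteq> e3" "e2 \<noteq> e3" "fst e1 = fst e2" "fst e1 = fst e3"
  shows False
proof -
  have d: "snd e1 \<noteq> snd e2" "snd e1 \<noteq> snd e3" "snd e2 \<noteq> snd e3"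
    using assms by (auto simp: prod_eq_iff)
  have s: "Inr ` {snd e1, snd e2, snd e3} \<subseteq> {b. rc_adj m nr M (Inl (fst e1)) b}"
    using adj_cell[OF assms(1)] adj_cell[OF assms(2)] adj_cell[OF assms(3)] assms(7,8) by auto
  have "card (Inr ` {snd e1, snd e2, snd e3} :: (nat + nat) set) = 3"
    using d by (auto simp: card_insert_if)
  moreover have "card (Inr ` {snd e1, snd e2, snd e3} :: (nat + nat) set) \<le> 2"
    using card_mono[OF adj_fin s] deg_col[of "fst e1"] nz_range[OF assms(1)] by simp
  ultimately show False by simp
qed

lemma no_three_row:
  assumes "e1 \<in> nz_cells m nr M" "e2 \<in> nz_cells m nr M" "e3 \<in> nz_cells m nr M"
    "e1 \<noteq> e2" "e1 \<noteq> e3" "e2 \<noteq> e3" "snd e1 = snd e2" "snd e1 = snd e3"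
  shows False
proof -
  have d: "fst e1 \<noteq> fst e2" "fst e1 \<noteq> fst e3" "fst e2 \<noteq> fst e3"
    using assms by (auto simp: prod_eq_iff)
  have s: "Inl ` {fst e1, fst e2, fst e3} \<subseteq> {b. rc_adj m nr M (Inr (snd e1)) b}"
    using adj_cell[OF assms(1)] adj_cell[OF assms(2)] adj_cell[OF assms(3)] assms(7,8) by auto
  have "card (Inl ` {fst e1, fst e2, fst e3} :: (nat + nat) set) = 3"
    using d by (auto simp: card_insert_if)
  moreover have "card (Inl ` {fst e1, fst e2, fst e3} :: (nat + nat) set) \<le> 2"
    using card_mono[OF adj_fin s] deg_row[of "snd e1"] nz_range[OF assms(1)] by simp
  ultimately show False by simp
qed

lemma ell3: "3 \<le> ell"
proof -
  obtain a where a: "a \<in> rc_vertices m nr" using cyc unfolding rc_graph_is_cycle_def by auto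
  obtain i where i: "i \<in> {1..m}"
  proof (cases a)
    case (Inl i) then show ?thesis using a that unfolding rc_vertices_def by auto
  next
    case (Inr j)
    then have "j \<in> {1..nr}" using a unfolding rc_vertices_def by auto
    then have "card {b. rc_adj m nr M (Inr j) b} = 2" by (rule deg_row)
    then obtain b where "rc_adj m nr M (Inr j) b" by (metis (mono_tags, lifting) card.empty empty_Collect_eq zero_neq_numeral)
    then show ?thesis using that unfolding rc_adj_def by auto
  qed
  obtain x y where xy: "{b. rc_adj m nr M (Inl i) b} = {x, y}" "x \<noteq> y"
    using deg_col[OF i] by (auto simp: card_2_iff)
  have "rc_adj m nr M (Inl i) x" "rc_adj m nr M (Inl i) y" using xy by auto
  then obtain j1 j2 where j: "x = Inr j1" "y = Inr j2" "j1 \<in> {1..nr}" "j2 \<in> {1..nr}" "M i j1 \<noteq> 0" "M i j2 \<noteq> 0"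
    unfolding rc_adj_def by auto
  obtain x' y' where xy': "{b. rc_adj m nr M (Inr j1) b} = {x', y'}" "x' \<noteq> y'"
    using deg_row[OF j(3)] by (auto simp: card_2_iff)
  have "rc_adj m nr M (Inr j1) x'" "rc_adj m nr M (Inr j1) y'" using xy' by auto
  then obtain i1 i2 where ii: "x' = Inl i1" "y' = Inl i2" "i1 \<in> {1..m}" "i2 \<in> {1..m}" "M i1 j1 \<noteq> 0" "M i2 j1 \<noteq> 0"
    unfolding rc_adj_def by auto
  obtain i' where i': "i' \<in> {1..m}" "M i' j1 \<noteq> 0" "i' \<noteq> i"
  proof (cases "i1 = i")
    case True
    then have "i2 \<noteq> i" using ii xy'(2) by auto
    then show ?thesis using that ii by blast
  next
    case False
    then show ?thesis using that ii by blast
  qed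
  have "{(i, j1), (i, j2), (i', j1)} \<subseteq> nz_cells m nr M" using i j i' unfolding nz_cells_def by auto
  from card_mono[OF nz_fin this] have "card {(i, j1), (i, j2), (i', j1)} \<le> ell"
    unfolding ell_def cycle_length_def .
  moreover have "card {(i, j1), (i, j2), (i', j1)} = 3" using xy j i' by (auto simp: card_insert_if)
  ultimately show ?thesis by simp
qed

lemma rs_range: "rs k \<in> {1..ell}"
proof -
  have "0 < ell" using ell3 by simp
  then show ?thesis unfolding rs_def by (simp add: Suc_leI)
qed

lemma cell_nz: "cellof k \<in> nz_cells m nr M"
  using lb rs_range unfolding cellof_def bij_betw_def by auto

lemma cell_eq: "cellof a = cellof b \<longleftrightarrow> rs a = rs b"
proof -
  have "inj_on lab {1..ell}" using lb unfolding bij_betw_def by simp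
  then show ?thesis unfolding cellof_def using rs_range inj_on_eq_iff by metis
qed

lemma rs_eq:
  assumes "1 \<le> a" "a \<le> b"
  shows "rs a = rs b \<longleftrightarrow> (\<exists>t. b = a + t * ell)"
proof -
  have "rs a = rs b \<longleftrightarrow> (b - 1) mod ell = (a - 1) mod ell" unfolding rs_def by auto
  also have "\<dots> \<longleftrightarrow> ell dvd (b - 1) - (a - 1)" by (rule mod_eq_dvd_iff_nat) (use assms in simp)
  also have "(b - 1) - (a - 1) = b - a" using assms by simp
  also have "ell dvd b - a \<longleftrightarrow> (\<exists>t. b = a + t * ell)"
  proof
    assume "ell dvd b - a"
    then obtain t where "b - a = ell * t" by (auto simp: dvd_def)
    then have "b = a + t * ell" using assms by (simp add: mult.commute)
    then show "\<exists>t. b = a + t * ell" by blast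
  next
    assume "\<exists>t. b = a + t * ell"
    then obtain t where "b = a + t * ell" by blast
    then show "ell dvd b - a" by simp
  qed
  finally show ?thesis .
qed

lemma rs_add: "1 \<le> a \<Longrightarrow> rs (a + t * ell) = rs a"
proof -
  assume "1 \<le> a"
  then have "a + t * ell - 1 = (a - 1) + t * ell" by simp
  then show ?thesis unfolding rs_def by simp
qed

lemma cell_add: "1 \<le> a \<Longrightarrow> cellof (a + t * ell) = cellof a"
  unfolding cellof_def using rs_add by simp

lemma cell_add1: "1 \<le> a \<Longrightarrow> cellof (a + ell) = cellof a"
  using cell_add[of a 1] by simp

lemma lns_share: "lns e \<inter> lns f \<noteq> {} \<longleftrightarrow> fst e = fst f \<or> snd e = snd f"
  unfolding lns_def by auto

lemma share_unique: "e \<noteq> f \<Longrightarrow> w1 \<in> lns e \<inter> lns f \<Longrightarrow> w2 \<in> lns e \<inter> lns f \<Longrightarrow> w1 = w2"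
  unfolding lns_def by (auto simp: prod_eq_iff)

lemma col_of:
  assumes "k \<in> {1..L}" "i \<in> {1..m}" "in_col v i (p k)"
  shows "i = fst (cellof k)"
proof -
  have "in_col v (fst (cellof k)) (p k)" using inc[OF assms(1)] unfolding in_cell_def by simp
  moreover have "fst (cellof k) \<in> {1..m}" using nz_range[OF cell_nz] by simp
  ultimately show ?thesis using col_unique assms by blast
qed

lemma row_of:
  assumes "k \<in> {1..L}" "j \<in> {1..nr}" "in_row h \<pi> j (p k)"
  shows "j = snd (cellof k)"
proof -
  have "in_row h \<pi> (snd (cellof k)) (p k)" using inc[OF assms(1)] unfolding in_cell_def by simp
  moreover have "snd (cellof k) \<in> {1..nr}" using nz_range[OF cell_nz] by simp
  ultimately show ?thesis using row_unique assms by blast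
qed

lemma arrow:
  assumes "a \<in> {1..L}" "b \<in> {1..L}" "arr (p a) (p b)"
  shows "\<exists>w \<in> lns (cellof a) \<inter> lns (cellof b). prc w (p a) (p b)"
  using assms(3) unfolding orient_arrow_def
proof (elim disjE bexE conjE)
  fix i assume i: "i \<in> {1..m}" "in_col v i (p a)" "in_col v i (p b)" "col_prec c i (p a) (p b)"
  have "i = fst (cellof a)" "i = fst (cellof b)" using col_of assms i by auto
  then have "Inl i \<in> lns (cellof a) \<inter> lns (cellof b)" unfolding lns_def by auto
  then show ?thesis using i(4) unfolding prc_def by force
next
  fix j assume j: "j \<in> {1..nr}" "in_row h \<pi> j (p a)" "in_row h \<pi> j (p b)" "row_prec r \<pi> j (p a) (p b)"
  have "j = snd (cellof a)" "j = snd (cellof b)" using row_of assms j by auto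
  then have "Inr j \<in> lns (cellof a) \<inter> lns (cellof b)" unfolding lns_def by auto
  then show ?thesis using j(4) unfolding prc_def by force
qed

lemma col_row_same:
  assumes "a \<in> {1..L}" "b \<in> {1..L}" "cellof a = cellof b" "a \<noteq> b"
  shows "col_prec c (fst (cellof a)) (p a) (p b) \<longleftrightarrow> row_prec r \<pi> (snd (cellof a)) (p a) (p b)"
proof -
  define i where "i = fst (cellof a)"
  define j where "j = snd (cellof a)"
  define x where "x = p a"
  define y where "y = p b"
  have ij: "i \<in> {1..m}" "j \<in> {1..nr}" "M i j \<noteq> 0" using nz_range[OF cell_nz[of a]] unfolding i_def j_def by auto
  have pmm: "\<forall>i\<in>{1..m}. c i \<in> {1, -1}" "\<forall>j\<in>{1..nr}. r j \<in> {1, -1}"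
    "\<forall>i\<in>{1..m}. \<forall>j\<in>{1..nr}. M i j \<noteq> 0 \<longrightarrow> M i j = c i * r j"
    using pm unfolding partial_mult_matrix_def by blast+
  have cij: "M i j = c i * r j" "c i = 1 \<or> c i = -1" "r j = 1 \<or> r j = -1"
    using pmm(1)[rule_format, OF ij(1)] pmm(2)[rule_format, OF ij(2)] pmm(3)[rule_format, OF ij(1) ij(2) ij(3)] by auto
  have xy12: "x \<in> {1..L}" "y \<in> {1..L}" unfolding x_def y_def using bij_betw_apply[OF pb] assms(1,2) by blast+
  have "inj_on p {1..L}" using pb by (rule bij_betw_imp_inj_on)
  then have xyne: "x \<noteq> y" unfolding x_def y_def using assms(1,2,4) inj_on_eq_iff by metis
  have cx: "in_cell v h \<pi> i j x" "in_cell v h \<pi> i j y"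
    using inc[OF assms(1)] inc[OF assms(2)] assms(3) unfolding x_def y_def i_def j_def by auto
  have gp': "\<forall>i\<in>{1..m}. \<forall>j\<in>{1..nr}. \<forall>x\<in>{1..L}. \<forall>y\<in>{1..L}.
        in_cell v h \<pi> i j x \<longrightarrow> in_cell v h \<pi> i j y \<longrightarrow> x < y \<longrightarrow>
        (M i j = 1 \<longrightarrow> \<pi> x < \<pi> y) \<and> (M i j = -1 \<longrightarrow> \<pi> y < \<pi> x)"
    and pperm: "\<pi> permutes {1..L}"
    using gp unfolding gridded_perm_def by blast+
  have pinj: "\<pi> x \<noteq> \<pi> y" using permutes_inj[OF pperm] xyne injD by metis
  have m1: "x < y \<Longrightarrow> (M i j = 1 \<longrightarrow> \<pi> x < \<pi> y) \<and> (M i j = -1 \<longrightarrow> \<pi> y < \<pi> x)"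
    using gp'[rule_format, OF ij(1) ij(2) xy12(1) xy12(2) cx(1) cx(2)] by blast
  have m2: "y < x \<Longrightarrow> (M i j = 1 \<longrightarrow> \<pi> y < \<pi> x) \<and> (M i j = -1 \<longrightarrow> \<pi> x < \<pi> y)"
    using gp'[rule_format, OF ij(1) ij(2) xy12(2) xy12(1) cx(2) cx(1)] by blast
  have "col_prec c i x y \<longleftrightarrow> row_prec r \<pi> j x y"
  proof (cases "x < y")
    case True
    then have "M i j = 1 \<longrightarrow> \<pi> x < \<pi> y" "M i j = -1 \<longrightarrow> \<pi> y < \<pi> x" using m1 by auto
    then show ?thesis using True cij pinj unfolding col_prec_def row_prec_def by auto
  next
    case False
    then have "y < x" using xyne by simp
    then have "M i j = 1 \<longrightarrow> \<pi> y < \<pi> x" "M i j = -1 \<longrightarrow> \<pi> x < \<pi> y" using m2 by auto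
    then show ?thesis using \<open>y < x\<close> cij pinj unfolding col_prec_def row_prec_def by auto
  qed
  then show ?thesis unfolding i_def j_def x_def y_def .
qed

lemma consist:
  assumes "a \<in> {1..L}" "b \<in> {1..L}" "cellof a = cellof b" "a \<noteq> b"
    "w1 \<in> lns (cellof a)" "w2 \<in> lns (cellof a)" "prc w1 (p a) (p b)"
  shows "prc w2 (p a) (p b)"
  using assms col_row_same[OF assms(1-4)] unfolding lns_def prc_def by auto

lemma baseB:
  assumes "1 \<le> k" "k + ell \<le> L" "w \<in> lns (cellof k)"
  shows "prc w (p (k + ell)) (p k)"
proof -
  have ce: "cellof (k + ell) = cellof k" using cell_add1 assms by simp
  have ne: "k + ell \<noteq> k" using ell3 by simp
  have kL: "k \<in> {1..L}" "k + ell \<in> {1..L}" using assms by auto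
  obtain w0 where w0: "w0 \<in> lns (cellof k)" "prc w0 (p (k + ell)) (p k)"
  proof (cases "k = 1")
    case True
    have "arr (p (k + ell)) (p k)" using c4 True by (simp add: add.commute)
    from arrow[OF kL(2) kL(1) this] show ?thesis using that by auto
  next
    case False
    have k1: "k - 1 \<in> {1..L}" using False assms by auto
    have "arr (p (k + ell)) (p (k + ell - ell - 1))" using c3[of "k + ell"] False assms by simp
    then have "arr (p (k + ell)) (p (k - 1))" by simp
    from arrow[OF kL(2) k1 this] obtain w1 where
      w1: "w1 \<in> lns (cellof (k + ell)) \<inter> lns (cellof (k - 1))" "prc w1 (p (k + ell)) (p (k - 1))" by blast
    have "arr (p (k - 1)) (p k)" using c2[of k] False assms by simp
    from arrow[OF k1 kL(1) this] obtain w2 where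
      w2: "w2 \<in> lns (cellof (k - 1)) \<inter> lns (cellof k)" "prc w2 (p (k - 1)) (p k)" by blast
    have "rs (k - 1) \<noteq> rs k"
    proof
      assume "rs (k - 1) = rs k"
      moreover have "1 \<le> k - 1" "k - 1 \<le> k" using False assms by auto
      ultimately obtain t where "k = k - 1 + t * ell" using rs_eq by blast
      then have "t * ell = 1" using False assms by arith
      then have "t \<noteq> 0" by (cases t) simp_all
      then have "ell \<le> t * ell" by simp
      then show False using \<open>t * ell = 1\<close> ell3 by linarith
    qed
    then have "cellof (k - 1) \<noteq> cellof k" using cell_eq by simp
    then have "w1 = w2" using share_unique[of "cellof (k - 1)" "cellof k" w1 w2] w1 w2 ce by auto
    then have "prc w1 (p (k - 1)) (p k)" using w2 by simp
    then have "prc w1 (p (k + ell)) (p k)" by (rule prc_trans[OF w1(2)])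
    then show ?thesis using that w1 ce by auto
  qed
  have u1: "w0 \<in> lns (cellof (k + ell))" using w0 ce by simp
  have u2: "w \<in> lns (cellof (k + ell))" using assms ce by simp
  show ?thesis by (rule consist[OF kL(2) kL(1) ce ne u1 u2 w0(2)])
qed

lemma subA:
  assumes "1 \<le> k" "1 \<le> t" "k + t * ell \<le> L" "w \<in> lns (cellof k)"
  shows "prc w (p (k + t * ell)) (p k)"
  using assms(2,3)
proof (induction t)
  case 0 then show ?case by simp
next
  case (Suc t)
  show ?case
  proof (cases "t = 0")
    case True then show ?thesis using baseB assms Suc by simp
  next
    case False
    have ih: "prc w (p (k + t * ell)) (p k)" using Suc False by simp
    have "cellof (k + t * ell) = cellof k" using cell_add assms by simp
    then have "prc w (p (k + t * ell + ell)) (p (k + t * ell))"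
      using baseB[of "k + t * ell" w] assms Suc by (simp add: add.assoc)
    then have X: "prc w (p (k + t * ell + ell)) (p k)" by (rule prc_trans[OF _ ih])
    have eq: "k + Suc t * ell = k + t * ell + ell" by simp
    show ?thesis unfolding eq by (rule X)
  qed
qed

lemma sc_simp: "q \<in> {1..ell} \<Longrightarrow> q mod ell + 1 = (if q = ell then 1 else q + 1)"
  by auto

lemma rs_id: "q \<in> {1..ell} \<Longrightarrow> rs q = q"
  unfolding rs_def by auto

lemma adj_consec:
  assumes "q \<in> {1..ell}"
  shows "lns (lab q) \<inter> lns (lab (q mod ell + 1)) \<noteq> {}"
proof -
  have "arr (p (q + 1 - 1)) (p (q + 1))" using c2[of "q + 1"] assms lt by auto
  then have "arr (p q) (p (q + 1))" by simp
  from arrow[OF _ _ this] assms lt have "lns (cellof q) \<inter> lns (cellof (q + 1)) \<noteq> {}" by auto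
  moreover have "cellof q = lab q" using rs_id assms unfolding cellof_def by simp
  moreover have "cellof (q + 1) = lab (q mod ell + 1)" unfolding cellof_def rs_def by simp
  ultimately show ?thesis by simp
qed

lemma pigeon:
  assumes "e \<in> nz_cells m nr M" "f1 \<in> nz_cells m nr M" "f2 \<in> nz_cells m nr M" "f3 \<in> nz_cells m nr M"
    "e \<noteq> f1" "e \<noteq> f2" "e \<noteq> f3" "f1 \<noteq> f2" "f1 \<noteq> f3" "f2 \<noteq> f3"
    "fst e = fst f1 \<or> snd e = snd f1" "fst e = fst f2 \<or> snd e = snd f2" "fst e = fst f3 \<or> snd e = snd f3"
  shows False
  using assms(11-13)
    no_three_col[OF assms(1,2,3,5,6,8)] no_three_col[OF assms(1,2,4,5,7,9)] no_three_col[OF assms(1,3,4,6,7,10)]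
    no_three_row[OF assms(1,2,3,5,6,8)] no_three_row[OF assms(1,2,4,5,7,9)] no_three_row[OF assms(1,3,4,6,7,10)]
  by blast

lemma graph:
  assumes "q1 \<in> {1..ell}" "q2 \<in> {1..ell}" "q1 \<noteq> q2" "lns (lab q1) \<inter> lns (lab q2) \<noteq> {}"
  shows "q2 = q1 mod ell + 1 \<or> q1 = q2 mod ell + 1"
proof (rule ccontr)
  assume nc: "\<not> ?thesis"
  define qp where "qp = q1 mod ell + 1"
  define qm where "qm = (if q1 = 1 then ell else q1 - 1)"
  have "q1 mod ell < ell" using ell3 by simp
  then have r1: "qp \<in> {1..ell}" unfolding qp_def by simp
  have r2: "qm \<in> {1..ell}" using assms ell3 unfolding qm_def by auto
  note r = r1 r2
  have qmq: "qm mod ell + 1 = q1" using sc_simp[OF r(2)] assms ell3 unfolding qm_def by auto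
  have d: "q2 \<noteq> qp" "q2 \<noteq> qm" "q1 \<noteq> qp" "q1 \<noteq> qm" "qp \<noteq> qm"
    using nc qmq sc_simp[OF assms(1)] assms ell3 unfolding qp_def qm_def by auto
  have inj: "inj_on lab {1..ell}" using lb unfolding bij_betw_def by simp
  have nz: "lab q \<in> nz_cells m nr M" if "q \<in> {1..ell}" for q using lb that unfolding bij_betw_def by auto
  have dl: "lab q \<noteq> lab q'" if "q \<in> {1..ell}" "q' \<in> {1..ell}" "q \<noteq> q'" for q q'
    using inj that inj_on_eq_iff by metis
  have s1: "lns (lab q1) \<inter> lns (lab qp) \<noteq> {}" using adj_consec[OF assms(1)] unfolding qp_def .
  have s2: "lns (lab q1) \<inter> lns (lab qm) \<noteq> {}" using adj_consec[OF r(2)] qmq by (simp add: Int_commute)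
  have a1: "fst (lab q1) = fst (lab q2) \<or> snd (lab q1) = snd (lab q2)" using assms(4) unfolding lns_share .
  have a2: "fst (lab q1) = fst (lab qp) \<or> snd (lab q1) = snd (lab qp)" using s1 unfolding lns_share .
  have a3: "fst (lab q1) = fst (lab qm) \<or> snd (lab q1) = snd (lab qm)" using s2 unfolding lns_share .
  show False
    by (rule pigeon[OF nz[OF assms(1)] nz[OF assms(2)] nz[OF r(1)] nz[OF r(2)]
      dl[OF assms(1,2,3)] dl[OF assms(1) r(1) d(3)] dl[OF assms(1) r(2) d(4)]
      dl[OF assms(2) r(1) d(1)] dl[OF assms(2) r(2) d(2)] dl[OF r d(5)] a1 a2 a3])
qed

lemma rs_suc: "1 \<le> k \<Longrightarrow> rs k mod ell + 1 = rs (k + 1)"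
proof -
  assume k: "1 \<le> k"
  have "((k - 1) mod ell + 1) mod ell = (k - 1 + 1) mod ell" by (simp add: mod_Suc_eq)
  also have "k - 1 + 1 = k" using k by simp
  finally show ?thesis unfolding rs_def by simp
qed

lemma arrow_w:
  assumes "a \<in> {1..L}" "b \<in> {1..L}" "arr (p a) (p b)" "cellof a \<noteq> cellof b"
    "w \<in> lns (cellof a) \<inter> lns (cellof b)"
  shows "prc w (p a) (p b)"
proof -
  obtain w' where w': "w' \<in> lns (cellof a) \<inter> lns (cellof b)" "prc w' (p a) (p b)"
    using arrow[OF assms(1-3)] by blast
  have "w' = w" using share_unique[OF assms(4) w'(1) assms(5)] .
  then show ?thesis using w' by simp
qed

lemma te: "1 \<le> (t::nat) \<Longrightarrow> t * e = e + (t - 1) * e"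
  by (cases t) auto

lemma main:
  assumes x: "x \<in> {1..L}" and y: "y \<in> {1..L}" and xy: "y + 2 \<le> x"
    and w: "w \<in> lns (cellof x) \<inter> lns (cellof y)"
  shows "prc w (p x) (p y)"
proof (cases "rs x = rs y")
  case True
  have yy: "1 \<le> y" "y \<le> x" using y xy by auto
  from True rs_eq[OF yy] obtain t where t: "x = y + t * ell" by metis
  have "t \<noteq> 0" using t xy by (cases t) auto
  then have "1 \<le> t" by simp
  from subA[OF yy(1) this _ , of w] t x w show ?thesis by simp
next
  case False
  then have cne: "cellof x \<noteq> cellof y" using cell_eq by simp
  have "lns (lab (rs x)) \<inter> lns (lab (rs y)) \<noteq> {}" using w unfolding cellof_def by auto
  from graph[OF rs_range rs_range False this]
  have "rs y = rs (x + 1) \<or> rs x = rs (y + 1)" using rs_suc x y by auto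
  then show ?thesis
  proof (elim disjE)
    assume A: "rs x = rs (y + 1)"
    have yy: "1 \<le> y + 1" "y + 1 \<le> x" using xy by auto
    from A rs_eq[OF yy] obtain t where t: "x = y + 1 + t * ell" by metis
    have "t \<noteq> 0" using t xy by (cases t) auto
    then have t1: "1 \<le> t" by simp
    then have "ell \<le> t * ell" by simp
    moreover have "1 \<le> y" using y by simp
    ultimately have xl: "ell + 1 < x" using t by linarith
    define z where "z = y + (t - 1) * ell"
    have zx: "x - ell - 1 = z" unfolding z_def using t te[OF t1, of ell] by simp
    have cz: "cellof z = cellof y" unfolding z_def using cell_add y by simp
    have zL: "z \<in> {1..L}" using y x xl zx by auto
    have "arr (p x) (p z)" using c3[OF xl] x zx by simp
    then have pz: "prc w (p x) (p z)" using arrow_w[OF x zL _ _] cne cz w by simp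
    show ?thesis
    proof (cases "t = 1")
      case True
      then show ?thesis using pz unfolding z_def by simp
    next
      case False
      then have "1 \<le> t - 1" using t1 by simp
      from subA[OF _ this, of y w] have "prc w (p z) (p y)" using y zL w unfolding z_def by simp
      then show ?thesis by (rule prc_trans[OF pz])
    qed
  next
    assume B: "rs y = rs (x + 1)"
    have yy: "1 \<le> y" "y \<le> x + 1" using y xy by auto
    from B rs_eq[OF yy] obtain t where t: "x + 1 = y + t * ell" by metis
    have "t \<noteq> 0" using t xy by (cases t) auto
    then have t1: "1 \<le> t" by simp
    show ?thesis
    proof (cases "y = 1")
      case False
      define z where "z = y - 1"
      have z1: "1 \<le> z" and xz: "x = z + t * ell" using False y t unfolding z_def by auto
      have czx: "cellof x = cellof z" using cell_add[OF z1] xz by simp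
      have zL: "z \<in> {1..L}" using z1 xz x by auto
      have "prc w (p (z + t * ell)) (p z)" using subA[OF z1 t1, of w] xz x w czx by simp
      then have p1: "prc w (p x) (p z)" using xz by simp
      have "arr (p z) (p y)" using c2[of y] False y unfolding z_def by simp
      then have p2: "prc w (p z) (p y)" using arrow_w[OF zL y] cne czx w by simp
      show ?thesis by (rule prc_trans[OF p1 p2])
    next
      case True
      have xt: "x = t * ell" using t True by simp
      have e1: "1 \<le> ell" using ell3 by simp
      have eL: "ell \<in> {1..L}" "ell + 1 \<in> {1..L}" using lt e1 by auto
      have xe: "x = ell + (t - 1) * ell" using xt te[OF t1, of ell] by simp
      have cxe: "cellof x = cellof ell"
        using cell_add[OF e1, of "t - 1"] xe by simp
      have ce1: "cellof (ell + 1) = cellof y" using cell_add1[of 1] True by (simp add: add.commute)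
      have "arr (p (ell + 1 - 1)) (p (ell + 1))" using c2[of "ell + 1"] lt e1 by simp
      then have "arr (p ell) (p (ell + 1))" by simp
      then have p2: "prc w (p ell) (p (ell + 1))" using arrow_w[OF eL] cne cxe ce1 w by simp
      have p3: "prc w (p (1 + ell)) (p 1)" using baseB[of 1 w] lt w True by simp
      have p23: "prc w (p ell) (p y)" using prc_trans[OF p2] p3 True by (simp add: add.commute)
      show ?thesis
      proof (cases "t = 1")
        case True
        then show ?thesis using p23 xt by simp
      next
        case False
        then have "1 \<le> t - 1" using t1 by simp
        from subA[OF e1 this, of w] have "prc w (p (ell + (t - 1) * ell)) (p ell)"
          using x xe w cxe by simp
        moreover have "ell + (t - 1) * ell = x" using xe by simp
        ultimately have "prc w (p x) (p ell)" by simp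
        then show ?thesis by (rule prc_trans[OF _ p23])
      qed
    qed
  qed
qed

end


theorem lemma3p9:
  fixes m nr L :: nat and M :: "nat \<Rightarrow> nat \<Rightarrow> int" and c r :: "nat \<Rightarrow> int"
    and \<pi> p :: "nat \<Rightarrow> nat" and v h :: "nat \<Rightarrow> real" and lab :: "nat \<Rightarrow> nat \<times> nat"
    and i :: nat
  assumes "gridding_matrix m nr M"
    and "partial_mult_matrix m nr M c r"
    and "rc_graph_is_cycle m nr M"
    and "gridded_coil m nr M c r L \<pi> v h p lab"
    and "1 < i" and "i < L"
  shows "M_divisible_on m nr c r \<pi> v h ({1..L} - {p i}) \<and>
         is_M_sum_on m nr c r \<pi> v h ({1..L} - {p i}) (p ` {i+1..L}) (p ` {1..i-1})"
proof -
  interpret C: coilctx m nr M c r L \<pi> p v h lab using assms(1-4) by unfold_locales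
  have pinj: "inj_on p {1..L}" using C.pb by (rule bij_betw_imp_inj_on)
  have pim: "p ` {1..L} = {1..L}" using C.pb by (simp add: bij_betw_def)
  have SnT: "p ` {i+1..L} \<noteq> {}" "p ` {1..i-1} \<noteq> {}" using assms(5,6) by auto
  have disj: "p ` {i+1..L} \<inter> p ` {1..i-1} = {}"
  proof -
    have "p ` {i+1..L} \<inter> p ` {1..i-1} = p ` ({i+1..L} \<inter> {1..i-1})"
      by (rule inj_on_image_Int[OF pinj, symmetric]) (use assms(5,6) in auto)
    also have "{i+1..L} \<inter> {1..i-1} = {}" by auto
    finally show ?thesis by simp
  qed
  have un: "p ` {i+1..L} \<union> p ` {1..i-1} = {1..L} - {p i}"
  proof -
    have "p ` {i+1..L} \<union> p ` {1..i-1} = p ` ({1..L} - {i})"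
    proof -
      have "{1..L} - {i} = {i+1..L} \<union> {1..i-1}" using assms(5,6) by auto
      then show ?thesis by (simp add: image_Un)
    qed
    also have "\<dots> = p ` {1..L} - p ` {i}"
    proof (rule inj_on_image_set_diff[OF pinj])
      show "{1..L} - {i} \<subseteq> {1..L}" by auto
      show "{i} \<subseteq> {1..L}" using assms(5,6) by auto
    qed
    finally show ?thesis using pim by simp
  qed
  have colc: "\<forall>s\<in>p ` {i+1..L}. \<forall>t\<in>p ` {1..i-1}. \<forall>i'\<in>{1..m}.
      in_col v i' s \<and> in_col v i' t \<longrightarrow> col_prec c i' s t"
  proof (intro ballI impI)
    fix s t i' assume s: "s \<in> p ` {i+1..L}" and t: "t \<in> p ` {1..i-1}" and i': "i' \<in> {1..m}"
      and ct: "in_col v i' s \<and> in_col v i' t"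
    obtain x where x: "x \<in> {i+1..L}" "s = p x" using s by auto
    obtain y where y: "y \<in> {1..i-1}" "t = p y" using t by auto
    have xL: "x \<in> {1..L}" and yL: "y \<in> {1..L}" and xy: "y + 2 \<le> x" using x y assms(5,6) by auto
    have "i' = fst (C.cellof x)" using C.col_of[OF xL i'] ct x by simp
    moreover have "i' = fst (C.cellof y)" using C.col_of[OF yL i'] ct y by simp
    ultimately have "Inl i' \<in> C.lns (C.cellof x) \<inter> C.lns (C.cellof y)" unfolding C.lns_def by auto
    from C.main[OF xL yL xy this] show "col_prec c i' s t" using x y unfolding C.prc_def by simp
  qed
  have rowc: "\<forall>s\<in>p ` {i+1..L}. \<forall>t\<in>p ` {1..i-1}. \<forall>j\<in>{1..nr}.
      in_row h \<pi> j s \<and> in_row h \<pi> j t \<longrightarrow> row_prec r \<pi> j s t"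
  proof (intro ballI impI)
    fix s t j assume s: "s \<in> p ` {i+1..L}" and t: "t \<in> p ` {1..i-1}" and j: "j \<in> {1..nr}"
      and ct: "in_row h \<pi> j s \<and> in_row h \<pi> j t"
    obtain x where x: "x \<in> {i+1..L}" "s = p x" using s by auto
    obtain y where y: "y \<in> {1..i-1}" "t = p y" using t by auto
    have xL: "x \<in> {1..L}" and yL: "y \<in> {1..L}" and xy: "y + 2 \<le> x" using x y assms(5,6) by auto
    have "j = snd (C.cellof x)" using C.row_of[OF xL j] ct x by simp
    moreover have "j = snd (C.cellof y)" using C.row_of[OF yL j] ct y by simp
    ultimately have "Inr j \<in> C.lns (C.cellof x) \<inter> C.lns (C.cellof y)" unfolding C.lns_def by auto
    from C.main[OF xL yL xy this] show "row_prec r \<pi> j s t" using x y unfolding C.prc_def by simp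
  qed
  have sum: "is_M_sum_on m nr c r \<pi> v h ({1..L} - {p i}) (p ` {i+1..L}) (p ` {1..i-1})"
    unfolding is_M_sum_on_def by (intro conjI disj un colc rowc)
  have "M_divisible_on m nr c r \<pi> v h ({1..L} - {p i})"
    unfolding M_divisible_on_def
    by (rule exI[of _ "p ` {i+1..L}"], rule exI[of _ "p ` {1..i-1}"]) (intro conjI SnT sum)
  then show ?thesis using sum by (rule conjI)
qed

end
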